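(* Let $r\ge 3$ and $n\ge\frac{(r-1)(2r+1)}{2}$, and let $\mathcal{H}$ be an $n$-vertex $\mathrm{T}_r$-free $r$-graph with $\delta_{r-1}^{+}(\mathcal{H})>\frac{2n}{2r+1}$. Let $V_1,\ldots,V_r\subseteq V(\mathcal{H})$ be pairwise disjoint sets, each independent in $\mathcal{H}$, with $|V_i|>\frac{2n}{2r+1}$ for all $i\in[r]$, and let $Z=V(\mathcal{H})\setminus(V_1\cup\cdots\cup V_r)$. Let $v\in Z$ and, for $i\in[r]$, let $$L_i=\{e\in L_{\mathcal{H}}(v)\colon |e\cap V_j|=1\text{ for every } j\in[r]\setminus\{i\}\}.$$ Then at most one of the sets $L_1,\ldots,L_r$ is nonempty.
   Context: An $r$-graph $\mathcal{H}$ is a collection of $r$-subsets (edges) of a finite vertex set $V(\mathcal{H})$. The shadow is $\partial\mathcal{H}=\{e\in\binom{V(\mathcal{H})}{r-1}\colon e\subseteq E \text{ for some } E\in\mathcal{H}\}$. For $e\in\partial\mathcal{H}$, $N_{\mathcal{H}}(e)=\{u\in V(\mathcal{H})\colon e\cup\{u\}\in\mathcal{H}\}$. The minimum positive codegree is $\delta_{r-1}^{+}(\mathcal{H})=\min\{|N_{\mathcal{H}}(e)|\colon e\in\partial\mathcal{H}\}$. The link of a vertex $v$ is $L_{\mathcal{H}}(v)=\{e\in\partial\mathcal{H}\colon e\cup\{v\}\in\mathcal{H}\}$. A set $I\subseteq V(\mathcal{H})$ is independent in $\mathcal{H}$ if every edge contains at most one vertex of $I$. The $r$-uniform generalized triangle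 is $\mathrm{T}_r=\{\{1,\ldots,r-1,r\},\{1,\ldots,r-1,r+1\},\{r,r+1,\ldots,2r-1\}\}$; $\mathcal{H}$ is $\mathrm{T}_r$-free if it contains no subhypergraph isomorphic to $\mathrm{T}_r$. *)

theory Defs
  imports Complex_Main
begin

definition is_rgraph :: "nat \<Rightarrow> 'a set \<Rightarrow> 'a set set \<Rightarrow> bool" where
  "is_rgraph r V H \<longleftrightarrow> finite V \<and> (\<forall>E\<in>H. E \<subseteq> V \<and> card E = r)"

definition shadow :: "nat \<Rightarrow> 'a set \<Rightarrow> 'a set set \<Rightarrow> 'a set set" where
  "shadow r V H = {e. e \<subseteq> V \<and> card e = r - 1 \<and> (\<exists>E\<in>H. e \<subseteq> E)}"

definition nbhd :: "'a set \<Rightarrow> 'a set set \<Rightarrow> 'a set \<Rightarrow> 'a set" where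
  "nbhd V H e = {u \<in> V. insert u e \<in> H}"

definition min_pos_codegree :: "nat \<Rightarrow> 'a set \<Rightarrow> 'a set set \<Rightarrow> nat" where
  "min_pos_codegree r V H = Min ((\<lambda>e. card (nbhd V H e)) ` shadow r V H)"

definition link :: "nat \<Rightarrow> 'a set \<Rightarrow> 'a set set \<Rightarrow> 'a \<Rightarrow> 'a set set" where
  "link r V H v = {e \<in> shadow r V H. insert v e \<in> H}"

definition independent :: "'a set set \<Rightarrow> 'a set \<Rightarrow> bool" where
  "independent H I \<longleftrightarrow> (\<forall>E\<in>H. card (E \<inter> I) \<le> 1)"

definition gen_triangle :: "nat \<Rightarrow> nat set set" where
  "gen_triangle r = {{1..r}, insert (r+1) {1..r-1}, {r..2*r-1}}"

definition Tr_free :: "nat \<Rightarrow> 'a set \<Rightarrow> 'a set set \<Rightarrow> bool" where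
  "Tr_free r V H \<longleftrightarrow> \<not> (\<exists>f. inj_on f {1..2*r-1} \<and> f ` {1..2*r-1} \<subseteq> V \<and>
      (\<forall>E\<in>gen_triangle r. f ` E \<in> H))"

end

theory Submission
  imports Defs
begin


locale cl =
  fixes r :: nat and V :: "'a set" and H :: "'a set set"
    and Vs :: "nat \<Rightarrow> 'a set" and v :: 'a
  assumes r3: "r \<ge> 3"
    and rg: "is_rgraph r V H"
    and nbig: "real (card V) \<ge> real ((r - 1) * (2 * r + 1)) / 2"
    and free: "Tr_free r V H"
    and codeg: "real (min_pos_codegree r V H) > 2 * real (card V) / real (2 * r + 1)"
    and Vsub: "\<forall>i\<in>{1..r}. Vs i \<subseteq> V"
    and Vdisj: "\<forall>i\<in>{1..r}. \<forall>j\<in>{1..r}. i \<noteq> j \<longrightarrow> Vs i \<inter> Vs j = {}"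
    and Vind: "\<forall>i\<in>{1..r}. independent H (Vs i)"
    and Vcard: "\<forall>i\<in>{1..r}. real (card (Vs i)) > 2 * real (card V) / real (2 * r + 1)"
    and vZ: "v \<in> V - (\<Union>i\<in>{1..r}. Vs i)"
begin

abbreviation "Z \<equiv> V - (\<Union>i\<in>{1..r}. Vs i)"
abbreviation "N \<equiv> nbhd V H"
definition "q = real (card V) / real (2*r+1)"

lemma finV: "finite V" using rg by (simp add: is_rgraph_def)
lemma edge: "E \<in> H \<Longrightarrow> E \<subseteq> V \<and> card E = r" using rg by (simp add: is_rgraph_def)

lemma T:
  assumes e1: "insert v s \<in> H" and e2: "insert c s \<in> H" and e3: "insert c D \<in> H"
    and cs: "card s = r - 1" and cD: "card D = r - 1" and vD: "v \<in> D" and vs: "v \<notin> s"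
    and cns: "c \<notin> s" and cnD: "c \<notin> D" and sD: "s \<inter> D = {}"
  shows False
proof -
  have fs: "finite s" using cs r3 card.infinite by fastforce
  have fD: "finite D" using cD r3 card.infinite by fastforce
  have cD': "card (D - {v}) = r - 2" using cD vD fD by simp
  obtain g1 where g1: "bij_betw g1 {1..r-1} s" using ex_bij_betw_nat_finite_1[OF fs] cs by auto
  obtain g2 where g2: "bij_betw g2 {1..r-2} (D - {v})"
    using ex_bij_betw_nat_finite_1[of "D - {v}"] fD cD' by auto
  define f where "f x = (if x < r then g1 x else if x = r then v else if x = r + 1 then c
      else g2 (x - (r+1)))" for x
  have im1: "f ` {1..r-1} = s"
  proof -
    have "f ` {1..r-1} = g1 ` {1..r-1}" by (rule image_cong) (use r3 in \<open>auto simp: f_def\<close>)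
    thus ?thesis using g1 by (simp add: bij_betw_def)
  qed
  have im2: "f ` {r+2..2*r-1} = D - {v}"
  proof -
    have eq0: "plus (r+1) ` {1..r-2} = {1+(r+1)..(r-2)+(r+1)}" by (rule image_add_atLeastAtMost)
    have h1: "1+(r+1) = r+2" and h2: "(r-2)+(r+1) = 2*r-1" using r3 by auto
    have eq: "{r+2..2*r-1} = plus (r+1) ` {1..r-2}" by (simp only: eq0 h1 h2)
    have "f ` {r+2..2*r-1} = (\<lambda>y. f (y + (r+1))) ` {1..r-2}" unfolding eq image_image
      by (simp add: add.commute)
    also have "\<dots> = g2 ` {1..r-2}" by (rule image_cong) (auto simp: f_def)
    finally show ?thesis using g2 by (simp add: bij_betw_def)
  qed
  have fr: "f r = v" "f (r+1) = c" by (auto simp: f_def)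
  have s1: "{1..r} = insert r {1..r-1}" using r3 by auto
  have s2: "{r..2*r-1} = insert r (insert (r+1) {r+2..2*r-1})" using r3 by auto
  have s3: "{1..2*r-1} = insert r (insert (r+1) ({1..r-1} \<union> {r+2..2*r-1}))" using r3 by auto
  have E1: "f ` {1..r} = insert v s" using im1 fr s1 by simp
  have E2: "f ` insert (r+1) {1..r-1} = insert c s" using im1 fr by simp
  have E3: "f ` {r..2*r-1} = insert c D" using im2 fr s2 vD by auto
  have Eall: "f ` {1..2*r-1} = insert v (insert c (s \<union> (D - {v})))" using im1 im2 fr s3 by auto
  have "card (f ` {1..2*r-1}) = 2 * r - 1"
  proof -
    have "card (s \<union> (D - {v})) = (r - 1) + (r - 2)"
      using card_Un_disjoint[of s "D - {v}"] fs fD cs cD' sD by auto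
    moreover have "v \<notin> s \<union> (D - {v})" "c \<notin> s \<union> (D - {v})" "c \<noteq> v"
      using vs cns cnD vD by auto
    ultimately show ?thesis unfolding Eall using fs fD r3 by simp
  qed
  hence inj: "inj_on f {1..2*r-1}" by (intro eq_card_imp_inj_on) auto
  have sub: "f ` {1..2*r-1} \<subseteq> V"
    using Eall edge[OF e1] edge[OF e3] by auto
  have "\<forall>E\<in>gen_triangle r. f ` E \<in> H"
    using E1 E2 E3 e1 e2 e3 by (auto simp: gen_triangle_def)
  with inj sub free show False unfolding Tr_free_def by blast
qed

end

context cl begin

definition "L i s \<longleftrightarrow> s \<in> link r V H v \<and> (\<forall>k\<in>{1..r} - {i}. card (s \<inter> Vs k) = 1)"

lemma ind: assumes "E \<in> H" "k \<in> {1..r}" "x \<in> E" "y \<in> E" "x \<in> Vs k" "y \<in> Vs k" shows "x = y"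
proof -
  have "card (E \<inter> Vs k) \<le> Suc 0" using Vind assms(1,2) by (auto simp: independent_def)
  moreover have "finite (E \<inter> Vs k)" using edge[OF assms(1)] finV by (meson finite_Int finite_subset)
  ultimately show ?thesis using assms(3-6) by (auto simp: card_le_Suc0_iff_eq)
qed

lemma disj: "x \<in> Vs k \<Longrightarrow> x \<in> Vs l \<Longrightarrow> k \<in> {1..r} \<Longrightarrow> l \<in> {1..r} \<Longrightarrow> k = l"
  using Vdisj by blast

lemma shadow_fin: "finite (shadow r V H)"
proof -
  have "shadow r V H \<subseteq> Pow V" by (auto simp: shadow_def)
  thus ?thesis using finV by (meson finite_Pow_iff finite_subset)
qed

lemma q_ge1: "q \<ge> 1"
proof -
  have "2 * (2*r+1) \<le> (r-1)*(2*r+1)" using r3 by (intro mult_right_mono) auto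
  hence h: "real (2 * (2*r+1)) \<le> real ((r-1)*(2*r+1))" by (simp only: of_nat_le_iff)
  have h2: "real (2 * (2*r+1)) = 2 * real (2*r+1)" by (simp only: of_nat_mult of_nat_numeral)
  have p: "real (2*r+1) > 0" by simp
  have "real (card V) \<ge> real (2*r+1)" 
  proof -
    have gen: "\<And>a b c::real. a/2 \<le> c \<Longrightarrow> b \<le> a \<Longrightarrow> b = 2*d \<Longrightarrow> d \<le> c" for d by linarith
    show ?thesis by (rule gen[OF nbig h h2])
  qed
  thus ?thesis unfolding q_def using p by simp
qed

lemma cod: assumes "D \<in> shadow r V H" shows "real (card (N D)) > 2 * q"
proof -
  have "min_pos_codegree r V H \<le> card (N D)" unfolding min_pos_codegree_def
    using assms shadow_fin by (intro Min_le) auto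
  hence "real (min_pos_codegree r V H) \<le> real (card (N D))" by simp
  moreover have "2 * q = 2 * real (card V) / real (2 * r + 1)" unfolding q_def by simp
  ultimately show ?thesis using codeg by linarith
qed

lemma nb: "x \<in> N D \<Longrightarrow> insert x D \<in> H \<and> x \<in> V" by (simp add: nbhd_def)
lemma finN: "finite (N D)" using finV by (rule finite_subset[rotated]) (auto simp: nbhd_def)

lemma nb_notin: assumes "x \<in> N D" "card D = r - 1" shows "x \<notin> D"
proof
  assume "x \<in> D"
  hence "insert x D = D" by auto
  with nb[OF assms(1)] edge have "card D = r" by auto
  with assms(2) r3 show False by simp
qed

lemma shadow_intro: "E \<in> H \<Longrightarrow> D \<subseteq> E \<Longrightarrow> card D = r - 1 \<Longrightarrow> D \<in> shadow r V H"
  using edge by (auto simp: shadow_def)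

lemma L_basic: assumes "L i s" shows "s \<subseteq> V" "card s = r - 1" "insert v s \<in> H" "v \<notin> s" "finite s"
proof -
  show "s \<subseteq> V" "card s = r - 1" "insert v s \<in> H" using assms by (auto simp: L_def link_def shadow_def)
  thus "finite s" using finV finite_subset by blast
  show "v \<notin> s"
  proof
    assume "v \<in> s" hence "insert v s = s" by auto
    with \<open>insert v s \<in> H\<close> edge have "card s = r" by auto
    with \<open>card s = r - 1\<close> r3 show False by simp
  qed
qed

lemma L_cover: assumes Ls: "L i s" and i: "i \<in> {1..r}" shows "s \<subseteq> (\<Union>k\<in>{1..r}-{i}. Vs k)"
proof -
  let ?U = "\<Union>k\<in>{1..r}-{i}. s \<inter> Vs k"
  have fs: "finite s" using L_basic[OF Ls] by simp
  have "card ?U = (\<Sum>k\<in>{1..r}-{i}. card (s \<inter> Vs k))"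
    by (rule card_UN_disjoint) (use fs Vdisj in auto)
  also have "\<dots> = (\<Sum>k\<in>{1..r}-{i}. 1)" using Ls by (intro sum.cong) (auto simp: L_def)
  also have "\<dots> = r - 1" using i by simp
  finally have "card ?U = card s" using L_basic[OF Ls] by simp
  hence "?U = s" using fs by (intro card_subset_eq) auto
  thus ?thesis by blast
qed

lemma L_noVi: assumes "L i s" "i \<in> {1..r}" shows "s \<inter> Vs i = {}"
  using L_cover[OF assms] disj assms(2) by blast

lemma L_single: assumes "L i s" "k \<in> {1..r}" "k \<noteq> i" obtains y where "s \<inter> Vs k = {y}"
proof -
  have "card (s \<inter> Vs k) = Suc 0" using assms by (auto simp: L_def)
  thus ?thesis using that by (auto simp: card_1_singleton_iff)
qed

lemma N_L: assumes Ls: "L i s" and i: "i \<in> {1..r}" shows "N s \<subseteq> Vs i \<union> Z"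
proof
  fix x assume x: "x \<in> N s"
  have xV: "x \<in> V" and E: "insert x s \<in> H" using nb[OF x] by auto
  have xs: "x \<notin> s" using nb_notin[OF x] L_basic[OF Ls] by simp
  show "x \<in> Vs i \<union> Z"
  proof (rule ccontr)
    assume "x \<notin> Vs i \<union> Z"
    then obtain k where k: "k \<in> {1..r}" "x \<in> Vs k" "k \<noteq> i" using xV by blast
    obtain y where y: "s \<inter> Vs k = {y}" using L_single[OF Ls k(1) k(3)] by blast
    have "x = y" using ind[OF E k(1), of x y] y k by auto
    with y xs show False by auto
  qed
qed

end

context cl begin

lemma sw_D: assumes Ls: "L i s" and w: "w \<in> s"
  shows "insert v (s - {w}) \<in> shadow r V H" "card (insert v (s - {w})) = r - 1"
proof -
  have c: "card (s - {w}) = r - 2" using L_basic[OF Ls] w by simp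
  show cD: "card (insert v (s - {w})) = r - 1" using c L_basic[OF Ls] r3 by simp
  show "insert v (s - {w}) \<in> shadow r V H"
    by (rule shadow_intro[OF L_basic(3)[OF Ls] _ cD]) auto
qed

lemma sw_class: assumes Ls: "L i s" and i: "i \<in> {1..r}" and k: "k \<in> {1..r}" "k \<noteq> i"
  and w: "w \<in> s" "w \<in> Vs k" and x: "x \<in> N (insert v (s - {w}))" and l: "l \<in> {1..r}" "x \<in> Vs l"
  shows "l = i \<or> l = k"
proof (rule ccontr)
  assume nl: "\<not> (l = i \<or> l = k)"
  obtain y where y: "s \<inter> Vs l = {y}" using L_single[OF Ls l(1)] nl by metis
  have "y \<noteq> w" using y w disj[of w k l] k l nl by auto
  hence yD: "y \<in> insert v (s - {w})" using y by auto
  have E: "insert x (insert v (s - {w})) \<in> H" using nb[OF x] by simp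
  have "x = y" using ind[OF E l(1), of x y] yD y l by auto
  moreover have "x \<notin> insert v (s - {w})" using nb_notin[OF x sw_D(2)[OF Ls w(1)]] .
  ultimately show False using yD by simp
qed

lemma sw_link: assumes Ls: "L i s" and w: "w \<in> s" and x: "x \<in> N (insert v (s - {w}))"
  shows "insert x (s - {w}) \<in> link r V H v"
proof -
  have E: "insert x (insert v (s - {w})) \<in> H" using nb[OF x] by simp
  have xn: "x \<notin> insert v (s - {w})" using nb_notin[OF x sw_D(2)[OF Ls w]] .
  have c: "card (s - {w}) = r - 2" using L_basic[OF Ls] w by simp
  have fs: "finite (s - {w})" using L_basic[OF Ls] by simp
  have cc: "card (insert x (s - {w})) = r - 1" using c xn fs r3 by simp
  have "insert x (s - {w}) \<in> shadow r V H" by (rule shadow_intro[OF E _ cc]) auto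
  moreover have "insert v (insert x (s - {w})) \<in> H" using E by (simp add: insert_commute)
  ultimately show ?thesis by (simp add: link_def)
qed

lemma sw_k: assumes Ls: "L i s" and i: "i \<in> {1..r}" and k: "k \<in> {1..r}" "k \<noteq> i"
  and w: "w \<in> s" "w \<in> Vs k" and x: "x \<in> N (insert v (s - {w}))" "x \<in> Vs k" "x \<noteq> w"
  shows "L i (insert x (s - {w}))"
proof -
  obtain y where y: "s \<inter> Vs k = {y}" using L_single[OF Ls k(1) k(2)] by metis
  have yw: "y = w" using y w by auto
  have "card (insert x (s - {w}) \<inter> Vs l) = 1" if l: "l \<in> {1..r} - {i}" for l
  proof (cases "l = k")
    case True
    have "insert x (s - {w}) \<inter> Vs l = {x}" using True y yw x by auto
    thus ?thesis by simp
  next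
    case False
    have "x \<notin> Vs l" "w \<notin> Vs l" using disj[of x k l] disj[of w k l] x w k l False by auto
    hence "insert x (s - {w}) \<inter> Vs l = s \<inter> Vs l" by auto
    thus ?thesis using Ls l by (simp add: L_def)
  qed
  thus ?thesis using sw_link[OF Ls w(1) x(1)] by (simp add: L_def)
qed

lemma sw_i: assumes Ls: "L i s" and i: "i \<in> {1..r}" and k: "k \<in> {1..r}" "k \<noteq> i"
  and w: "w \<in> s" "w \<in> Vs k" and x: "x \<in> N (insert v (s - {w}))" "x \<in> Vs i"
  shows "L k (insert x (s - {w}))"
proof -
  have s0: "s \<inter> Vs i = {}" using L_noVi[OF Ls i] .
  have "card (insert x (s - {w}) \<inter> Vs l) = 1" if l: "l \<in> {1..r} - {k}" for l
  proof (cases "l = i")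
    case True
    have "insert x (s - {w}) \<inter> Vs l = {x}" using True s0 x by auto
    thus ?thesis by simp
  next
    case False
    have "x \<notin> Vs l" "w \<notin> Vs l" using disj[of x i l] disj[of w k l] x w k l i False by auto
    hence "insert x (s - {w}) \<inter> Vs l = s \<inter> Vs l" by auto
    thus ?thesis using Ls l False by (simp add: L_def)
  qed
  thus ?thesis using sw_link[OF Ls w(1) x(1)] by (simp add: L_def)
qed

lemma finVs: "k \<in> {1..r} \<Longrightarrow> finite (Vs k)" using Vsub finV finite_subset by blast

lemma cardV: "real (card V) = real (card Z) + (\<Sum>k\<in>{1..r}. real (card (Vs k)))"
proof -
  have U: "card (\<Union>k\<in>{1..r}. Vs k) = (\<Sum>k\<in>{1..r}. card (Vs k))"
    by (rule card_UN_disjoint) (use finVs Vdisj in auto)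
  have "V = Z \<union> (\<Union>k\<in>{1..r}. Vs k)" using Vsub by auto
  moreover have "card (Z \<union> (\<Union>k\<in>{1..r}. Vs k)) = card Z + card (\<Union>k\<in>{1..r}. Vs k)"
    by (rule card_Un_disjoint) (use finV finVs in auto)
  ultimately have "card V = card Z + (\<Sum>k\<in>{1..r}. card (Vs k))" using U by simp
  thus ?thesis by (simp add: of_nat_sum[symmetric] del: of_nat_sum)
qed

lemma sum_gt: assumes "I \<subseteq> {1..r}" "I \<noteq> {}"
  shows "(\<Sum>k\<in>I. real (card (Vs k))) > real (card I) * (2 * q)"
proof -
  have fI: "finite I" using assms(1) finite_subset by blast
  have "(\<Sum>k\<in>I. 2 * q) < (\<Sum>k\<in>I. real (card (Vs k)))"
  proof (rule sum_strict_mono[OF fI assms(2)])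
    fix k assume "k \<in> I"
    hence "real (card (Vs k)) > 2 * real (card V) / real (2 * r + 1)" using Vcard assms(1) by auto
    moreover have "2 * q = 2 * real (card V) / real (2 * r + 1)" unfolding q_def by simp
    ultimately show "2 * q < real (card (Vs k))" by simp
  qed
  thus ?thesis by simp
qed

lemma nq: "real (card V) = (2 * real r + 1) * q"
proof -
  have "(1 + 2*real r) \<noteq> 0" by (smt (verit) of_nat_0_le_iff)
  thus ?thesis unfolding q_def by (simp add: field_simps)
qed

lemma Z1: "real (card Z) < q"
proof -
  have "(\<Sum>k\<in>{1..r}. real (card (Vs k))) > real r * (2 * q)" using sum_gt[of "{1..r}"] r3 by simp
  thus ?thesis using cardV nq by (simp add: algebra_simps)
qed

lemma Z3: assumes i: "i \<in> {1..r}" shows "real (card (Vs i)) + real (card Z) < 3 * q"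
proof -
  have S1: "(\<Sum>k\<in>{1..r}. real (card (Vs k))) = real (card (Vs i)) + (\<Sum>k\<in>{1..r}-{i}. real (card (Vs k)))"
    using i by (simp add: sum.remove)
  have G: "(\<Sum>k\<in>{1..r}-{i}. real (card (Vs k))) > real (card ({1..r}-{i})) * (2 * q)"
  proof (intro sum_gt)
    have "card ({1..r}-{i}) = r - 1" using i by simp
    thus "{1..r}-{i} \<noteq> {}" using r3 by (metis card.empty not_numeral_le_zero diff_is_0_eq' le_trans one_le_numeral bot_nat_0.extremum_uniqueI Suc_1 Suc_diff_le diff_Suc_1 numeral_3_eq_3 not_less_eq_eq)
  qed auto
  have C: "real (card ({1..r}-{i})) = real r - 1" using i r3 by simp
  have G': "(\<Sum>k\<in>{1..r}-{i}. real (card (Vs k))) > (real r - 1) * (2 * q)" using G unfolding C .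
  have G'': "(real r - 1) * (2 * q) = 2*(real r*q) - 2*q" by (simp add: algebra_simps)
  have B: "real (card V) = 2*(real r * q) + q" using nq by (simp add: algebra_simps)
  show ?thesis using S1 G' G'' B cardV by linarith
qed

lemma Z5: assumes i: "i \<in> {1..r}" and j: "j \<in> {1..r}" and ij: "i \<noteq> j"
  shows "real (card (Vs i)) + real (card (Vs j)) + real (card Z) < 5 * q"
proof -
  have "(\<Sum>k\<in>{1..r}. real (card (Vs k))) = real (card (Vs i)) + (\<Sum>k\<in>{1..r}-{i}. real (card (Vs k)))"
    using i by (simp add: sum.remove)
  moreover have "(\<Sum>k\<in>{1..r}-{i}. real (card (Vs k))) = real (card (Vs j)) + (\<Sum>k\<in>{1..r}-{i}-{j}. real (card (Vs k)))"
    using i j ij by (subst sum.remove[of _ j]) auto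
  moreover have "{1..r}-{i}-{j} \<noteq> {}"
  proof -
    have "card ({1..r}-{i}-{j}) = r - 2" using i j ij by (simp add: card_Diff_singleton)
    show ?thesis
    proof
      assume h: "{1..r}-{i}-{j} = {}"
      have "card ({1..r}-{i}-{j}) = 0" by (simp only: h card.empty)
      with \<open>card ({1..r}-{i}-{j}) = r - 2\<close> r3 show False by simp
    qed
  qed
  hence "(\<Sum>k\<in>{1..r}-{i}-{j}. real (card (Vs k))) > real (card ({1..r}-{i}-{j})) * (2 * q)"
    by (intro sum_gt) auto
  moreover have C: "real (card ({1..r}-{i}-{j})) = real r - 2" using i j ij r3 by (simp add: card_Diff_singleton)
  ultimately have S1: "(\<Sum>k\<in>{1..r}. real (card (Vs k))) = real (card (Vs i)) + (real (card (Vs j)) + (\<Sum>k\<in>{1..r}-{i}-{j}. real (card (Vs k))))"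
    and G: "(\<Sum>k\<in>{1..r}-{i}-{j}. real (card (Vs k))) > (real r - 2) * (2 * q)" by simp_all
  have G'': "(real r - 2) * (2 * q) = 2*(real r*q) - 4*q" by (simp add: algebra_simps)
  have A: "(\<Sum>k\<in>{1..r}. real (card (Vs k))) > real (card (Vs i)) + real (card (Vs j)) + 2*(real r * q) - 4*q"
    using S1 G G'' by linarith
  have B: "real (card V) = 2*(real r * q) + q" using nq by (simp add: algebra_simps)
  show ?thesis using A B cardV by linarith
qed

end

context cl begin

lemma noZ: "x \<in> Vs k \<Longrightarrow> k \<in> {1..r} \<Longrightarrow> x \<notin> Z" by blast

lemma Tdisj: assumes Ls: "L i s" and D: "card D = r - 1" "v \<in> D" "s \<inter> D = {}"
  shows "N s \<inter> N D = {}"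
proof (rule ccontr)
  assume "N s \<inter> N D \<noteq> {}"
  then obtain c where c: "c \<in> N s" "c \<in> N D" by blast
  show False
  proof (rule T[of s c D])
    show "insert v s \<in> H" "card s = r - 1" "v \<notin> s" using L_basic[OF Ls] by auto
    show "insert c s \<in> H" "insert c D \<in> H" using nb c by auto
    show "c \<notin> s" using nb_notin[OF c(1)] L_basic[OF Ls] by simp
    show "c \<notin> D" using nb_notin[OF c(2) D(1)] .
  qed (use D in auto)
qed

lemma main: "\<forall>i j s t. i \<in> {1..r} \<longrightarrow> j \<in> {1..r} \<longrightarrow> i \<noteq> j \<longrightarrow> L i s \<longrightarrow> L j t
   \<longrightarrow> card (s \<inter> t) = m \<longrightarrow> False"
proof (induction m rule: less_induct)
  case (less m)
  show ?case
  proof (intro allI impI)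
    fix i j s t assume i: "i \<in> {1..r}" and j: "j \<in> {1..r}" and ij: "i \<noteq> j"
      and Ls: "L i s" and Lt: "L j t" and m: "card (s \<inter> t) = m"
    obtain ti where ti: "t \<inter> Vs i = {ti}" using L_single[OF Lt i] ij by metis
    have fst: "finite (s \<inter> t)" using L_basic(5)[OF Ls] by simp
    show False
    proof (cases "s \<inter> t = {}")
      case False
      then obtain w where w: "w \<in> s" "w \<in> t" by blast
      from L_cover[OF Ls i] w obtain k where k: "k \<in> {1..r}" "k \<noteq> i" "w \<in> Vs k" by blast
      have kj: "k \<noteq> j" using L_noVi[OF Lt j] w k by blast
      obtain y where y: "t \<inter> Vs k = {y}" using L_single[OF Lt k(1) kj] by metis
      have tk: "t \<inter> Vs k = {w}" using y w k by auto
      define D where "D = insert v (s - {w})"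
      have Dsh: "D \<in> shadow r V H" and cD: "card D = r - 1" unfolding D_def using sw_D[OF Ls w(1)] by auto
      have lt: "card (insert x (s - {w}) \<inter> t) < m" if "x \<notin> t" for x
      proof -
        have "insert x (s - {w}) \<inter> t \<subseteq> (s \<inter> t) - {w}" using that by auto
        hence "card (insert x (s - {w}) \<inter> t) \<le> card ((s \<inter> t) - {w})" using fst by (intro card_mono) auto
        also have "\<dots> < card (s \<inter> t)" using fst w by (intro card_Diff1_less) auto
        finally show ?thesis using m by simp
      qed
      have sub: "N D \<subseteq> insert w (insert ti (Z - {v}))"
      proof
        fix x assume x: "x \<in> N D"
        have xV: "x \<in> V" using nb[OF x] by simp
        have xD: "x \<notin> D" using nb_notin[OF x cD] .
        show "x \<in> insert w (insert ti (Z - {v}))"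
        proof (cases "x \<in> (\<Union>k\<in>{1..r}. Vs k)")
          case False then show ?thesis using xV xD D_def by auto
        next
          case True then obtain l where l: "l \<in> {1..r}" "x \<in> Vs l" by blast
          have "l = i \<or> l = k" using sw_class[OF Ls i k(1) k(2) w(1) k(3) x[unfolded D_def] l] .
          then show ?thesis
          proof
            assume lk: "l = k"
            show ?thesis
            proof (rule ccontr)
              assume nx: "x \<notin> insert w (insert ti (Z - {v}))"
              hence xw: "x \<noteq> w" by auto
              have L': "L i (insert x (s - {w}))"
                using sw_k[OF Ls i k(1) k(2) w(1) k(3) x[unfolded D_def]] l lk xw by simp
              have "x \<notin> t" using tk l lk xw by auto
              thus False using less.IH[OF lt[OF \<open>x \<notin> t\<close>]] i j ij L' Lt by blast
            qed
          next
            assume li: "l = i"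
            show ?thesis
            proof (rule ccontr)
              assume nx: "x \<notin> insert w (insert ti (Z - {v}))"
              have L': "L k (insert x (s - {w}))"
                using sw_i[OF Ls i k(1) k(2) w(1) k(3) x[unfolded D_def]] l li by simp
              have "x \<notin> t" using ti l li nx by auto
              thus False using less.IH[OF lt[OF \<open>x \<notin> t\<close>]] k(1) j kj L' Lt by blast
            qed
          qed
        qed
      qed
      have "card (N D) \<le> card (insert w (insert ti (Z - {v})))" using sub finV by (intro card_mono) auto
      also have "\<dots> \<le> Suc (Suc (card (Z - {v})))" by (simp add: card_insert_le_m1)
      also have "card (Z - {v}) = card Z - 1" using vZ by simp
      finally have "card (N D) \<le> card Z + 1" using vZ finV
        by (metis Suc_eq_plus1 add_Suc_shift card_Diff_singleton card_gt_0_iff diff_Suc_1 empty_iff finite_Diff le_SucE le_Suc_eq Suc_diff_1 plus_1_eq_Suc)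
      hence "real (card (N D)) \<le> real (card Z) + 1" by simp
      thus False using cod[OF Dsh] Z1 q_ge1 by linarith
    next
      case True
      obtain sj where sj: "s \<inter> Vs j = {sj}" using L_single[OF Ls j] ij by metis
      have tis: "ti \<in> t" "ti \<in> Vs i" using ti by auto
      have sjs: "sj \<in> s" "sj \<in> Vs j" using sj by auto
      define B where "B = insert v (t - {ti})"
      have Bsh: "B \<in> shadow r V H" and cB: "card B = r - 1" unfolding B_def using sw_D[OF Lt tis(1)] by auto
      have NBs: "N s \<inter> N B = {}"
        by (rule Tdisj[OF Ls cB]) (use True L_basic(4)[OF Ls] in \<open>auto simp: B_def\<close>)
      have Bcl: "x \<in> Vs j \<or> x \<in> Vs i \<or> x \<in> Z" if x: "x \<in> N B" for x
      proof (cases "x \<in> (\<Union>k\<in>{1..r}. Vs k)")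
        case False then show ?thesis using nb[OF x] by auto
      next
        case True then obtain l where l: "l \<in> {1..r}" "x \<in> Vs l" by blast
        have "l = j \<or> l = i" using sw_class[OF Lt j i _ tis(1) tis(2) x[unfolded B_def] l] ij by auto
        thus ?thesis using l by auto
      qed
      obtain z where z: "z \<in> N B" "z \<in> Vs j"
      proof (rule ccontr)
        assume "\<not> thesis"
        hence nz: "\<And>z. z \<in> N B \<Longrightarrow> z \<notin> Vs j" using that by blast
        have "N B \<union> N s \<subseteq> Vs i \<union> Z" using Bcl nz N_L[OF Ls i] by blast
        hence "card (N B \<union> N s) \<le> card (Vs i \<union> Z)" using finV finVs[OF i] by (intro card_mono) auto
        moreover have "card (N B \<union> N s) = card (N B) + card (N s)"
          using NBs finN by (intro card_Un_disjoint) auto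
        moreover have "card (Vs i \<union> Z) = card (Vs i) + card Z"
          using finV finVs[OF i] i by (intro card_Un_disjoint) auto
        ultimately have "real (card (N B)) + real (card (N s)) \<le> real (card (Vs i)) + real (card Z)"
          by (metis of_nat_add of_nat_le_iff)
        moreover have "s \<in> shadow r V H" using Ls by (simp add: L_def link_def)
        ultimately show False using cod[OF Bsh] cod[of s] Z3[OF i] by linarith
      qed
      define s' where "s' = insert z (t - {ti})"
      have Ls': "L i s'" unfolding s'_def using sw_i[OF Lt j i _ tis(1) tis(2) z(1)[unfolded B_def] z(2)] ij by auto
      define C where "C = insert v (s - {sj})"
      have Csh: "C \<in> shadow r V H" and cC: "card C = r - 1" unfolding C_def using sw_D[OF Ls sjs(1)] by auto
      have vt: "v \<notin> t" using L_basic(4)[OF Lt] .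
      have zv: "z \<noteq> v" using z vZ j by auto
      have zs: "z \<notin> s - {sj}" using z sj by auto
      have NCt: "N t \<inter> N C = {}"
        by (rule Tdisj[OF Lt cC]) (use True vt in \<open>auto simp: C_def\<close>)
      have NCs': "N s' \<inter> N C = {}"
        by (rule Tdisj[OF Ls' cC]) (use True vt zv zs in \<open>auto simp: C_def s'_def\<close>)
      have Ccl: "N C \<subseteq> Vs i \<union> Vs j \<union> Z"
      proof
        fix x assume x: "x \<in> N C"
        show "x \<in> Vs i \<union> Vs j \<union> Z"
        proof (cases "x \<in> (\<Union>k\<in>{1..r}. Vs k)")
          case False then show ?thesis using nb[OF x] by auto
        next
          case True then obtain l where l: "l \<in> {1..r}" "x \<in> Vs l" by blast
          have "l = i \<or> l = j" using sw_class[OF Ls i j _ sjs(1) sjs(2) x[unfolded C_def] l] ij by auto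
          thus ?thesis using l by auto
        qed
      qed
      have Nt: "N t \<subseteq> Vs j \<union> Z" using N_L[OF Lt j] .
      have Ns': "N s' \<subseteq> Vs i \<union> Z" using N_L[OF Ls' i] .
      have int: "N t \<inter> N s' \<subseteq> Z" using Nt Ns' Vdisj i j ij by blast
      have U: "N C \<union> (N t \<union> N s') \<subseteq> Vs i \<union> Vs j \<union> Z" using Ccl Nt Ns' by blast
      have c1: "card (N C \<union> (N t \<union> N s')) = card (N C) + card (N t \<union> N s')"
        using NCt NCs' finN by (intro card_Un_disjoint) auto
      have c2: "card (N t \<union> N s') + card (N t \<inter> N s') = card (N t) + card (N s')"
        using finN by (intro card_Un_Int[symmetric]) auto
      have c3: "card (N t \<inter> N s') \<le> card Z" using int finV by (intro card_mono) auto
      have c4: "card (N C \<union> (N t \<union> N s')) \<le> card (Vs i \<union> Vs j \<union> Z)"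
        using U finV finVs[OF i] finVs[OF j] by (intro card_mono) auto
      have c5: "card (Vs i \<union> Vs j \<union> Z) = card (Vs i) + card (Vs j) + card Z"
      proof -
        have "card (Vs i \<union> Vs j) = card (Vs i) + card (Vs j)"
          using finVs[OF i] finVs[OF j] Vdisj i j ij by (intro card_Un_disjoint) auto
        moreover have "card ((Vs i \<union> Vs j) \<union> Z) = card (Vs i \<union> Vs j) + card Z"
          using finVs[OF i] finVs[OF j] finV i j by (intro card_Un_disjoint) auto
        ultimately show ?thesis by simp
      qed
      have "card (N C) + card (N t) + card (N s') \<le> card (Vs i) + card (Vs j) + card Z + card Z"
        using c1 c2 c3 c4 c5 by linarith
      hence R: "real (card (N C)) + real (card (N t)) + real (card (N s')) \<le>
          real (card (Vs i)) + real (card (Vs j)) + real (card Z) + real (card Z)"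
        by (metis of_nat_add of_nat_le_iff)
      have "t \<in> shadow r V H" using Lt by (simp add: L_def link_def)
      moreover have "s' \<in> shadow r V H" using Ls' by (simp add: L_def link_def)
      ultimately show False using R cod[OF Csh] cod[of t] cod[of s'] Z5[OF i j ij] Z1 by linarith
    qed
  qed
qed

end

theorem claim2p5:
  fixes r :: nat and V :: "'a set" and H :: "'a set set"
    and Vs :: "nat \<Rightarrow> 'a set" and v :: 'a
  assumes r3: "r \<ge> 3"
    and rg: "is_rgraph r V H"
    and nbig: "real (card V) \<ge> real ((r - 1) * (2 * r + 1)) / 2"
    and free: "Tr_free r V H"
    and codeg: "real (min_pos_codegree r V H) > 2 * real (card V) / real (2 * r + 1)"
    and Vsub: "\<forall>i\<in>{1..r}. Vs i \<subseteq> V"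
    and Vdisj: "\<forall>i\<in>{1..r}. \<forall>j\<in>{1..r}. i \<noteq> j \<longrightarrow> Vs i \<inter> Vs j = {}"
    and Vind: "\<forall>i\<in>{1..r}. independent H (Vs i)"
    and Vcard: "\<forall>i\<in>{1..r}. real (card (Vs i)) > 2 * real (card V) / real (2 * r + 1)"
    and vZ: "v \<in> V - (\<Union>i\<in>{1..r}. Vs i)"
  shows "\<forall>i\<in>{1..r}. \<forall>j\<in>{1..r}.
     {e \<in> link r V H v. \<forall>k\<in>{1..r} - {i}. card (e \<inter> Vs k) = 1} \<noteq> {} \<and>
     {e \<in> link r V H v. \<forall>k\<in>{1..r} - {j}. card (e \<inter> Vs k) = 1} \<noteq> {} \<longrightarrow> i = j"
proof -
  have "cl r V H Vs v" unfolding cl_def using assms by blast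
  then interpret cl r V H Vs v .
  show ?thesis
  proof (intro ballI impI)
    fix i j assume i: "i \<in> {1..r}" and j: "j \<in> {1..r}"
      and h: "{e \<in> link r V H v. \<forall>k\<in>{1..r} - {i}. card (e \<inter> Vs k) = 1} \<noteq> {} \<and>
     {e \<in> link r V H v. \<forall>k\<in>{1..r} - {j}. card (e \<inter> Vs k) = 1} \<noteq> {}"
    show "i = j"
    proof (rule ccontr)
      assume ij: "i \<noteq> j"
      from h obtain s t where "L i s" "L j t" unfolding L_def by blast
      thus False using main i j ij by blast
    qed
  qed
qed

end
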